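(* Let $q\ge 1$ and $s \ge 0$ be integers and assume that the polynomials $L_0,\dots,L_q$ defined in the context are linearly independent. For $k=0,\dots,q$ and $m=0,\dots,2^s-1$ define $$e_{k,m}(z) = \frac{1}{\sqrt{(2k+1)2^s}}\, r_q^m(z2^{-s})\, D_q^{-1}(z2^{-s})\, L_k(z2^{-s}), \qquad \tilde e_{k,m}(z) = D_q^{2^s}(z2^{-s})\, e_{k,m}(z),$$ and $\Pi^m = \{\tilde e_{0,m},\dots,\tilde e_{q,m}\}$. Then $$\dim \operatorname{span} \bigcup_{m=0}^{2^s-1}\Pi^m = q\,2^s + 1.$$
   Context: $N_q(z) = \sum_{j=0}^q \frac{(2q-j)!\,q!}{(2q)!\,j!\,(q-j)!} z^j$, $D_q(z) = N_q(-z)$, $r_q = N_q/D_q$ (diagonal Padé approximant of $e^z$). For scalar $z$ (not a zero of $D_q$), let $C_0(z),\dots,C_q(z)$ be the solution of the linear system, with $\tilde C_k = C_k/(2k+1)$, $\tilde C_{q+1}=0$: $\sum_{k=0}^q(-1)^k(2k+1)\tilde C_k = 1$ and, for $j=1,\dots,q$, $-z\tilde C_{j-1} + (4j+2)\tilde C_j + z\tilde C_{j+1} = 0$. These are rational functions of the form $C_k(z) = L_k(z)/D_q(z)$ with $L_k$ polynomials of degree at most $q$, and $\sum_k C_k(z) = r_q(z)$. The functions $\tilde e_{k,m}$ are polynomials of degree at most $q2^s$. *)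

theory Defs
  imports "HOL-Analysis.Analysis" "HOL-Computational_Algebra.Polynomial"
begin

text \<open>Numerator of the diagonal Pade approximant of exp.\<close>
definition padeN :: "nat \<Rightarrow> complex poly" where
  "padeN q = (\<Sum>j\<le>q. monom (of_real ((fact (2*q-j) * fact q) / (fact (2*q) * fact j * fact (q-j)))) j)"

definition padeD :: "nat \<Rightarrow> complex poly" where
  "padeD q = pcompose (padeN q) [:0, -1:]"

definition pade_r :: "nat \<Rightarrow> complex \<Rightarrow> complex" where
  "pade_r q z = poly (padeN q) z / poly (padeD q) z"

text \<open>L is the family of numerator polynomials: for every z that is not a zero of D_q,
  C_k(z) = L_k(z)/D_q(z) solves the linear system of the context.\<close>
definition is_L_family :: "nat \<Rightarrow> (nat \<Rightarrow> complex poly) \<Rightarrow> bool" where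
  "is_L_family q L \<longleftrightarrow> (\<forall>z. poly (padeD q) z \<noteq> 0 \<longrightarrow>
     (let Ct = (\<lambda>k. if k \<le> q then poly (L k) z / poly (padeD q) z / of_nat (2*k+1) else 0)
      in (\<Sum>k\<le>q. (-1)^k * of_nat (2*k+1) * Ct k) = 1 \<and>
         (\<forall>j\<in>{1..q}. - z * Ct (j-1) + of_nat (4*j+2) * Ct j + z * Ct (j+1) = 0)))"

definition e_fun :: "nat \<Rightarrow> nat \<Rightarrow> (nat \<Rightarrow> complex poly) \<Rightarrow> nat \<Rightarrow> nat \<Rightarrow> complex \<Rightarrow> complex" where
  "e_fun q s L k m z = (let w = z / 2^s in
     1 / of_real (sqrt (real (2*k+1) * 2^s)) * pade_r q w ^ m * inverse (poly (padeD q) w) * poly (L k) w)"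

text \<open>tilde e_{k,m}: the polynomial that agrees with D_q^{2^s}(z 2^{-s}) e_{k,m}(z) wherever
  the expression is defined (i.e. D_q(z 2^{-s}) \<noteq> 0).\<close>
definition e_tilde :: "nat \<Rightarrow> nat \<Rightarrow> (nat \<Rightarrow> complex poly) \<Rightarrow> nat \<Rightarrow> nat \<Rightarrow> complex poly" where
  "e_tilde q s L k m = (THE p. \<forall>z. poly (padeD q) (z / 2^s) \<noteq> 0 \<longrightarrow>
      poly p z = poly (padeD q) (z / 2^s) ^ (2^s) * e_fun q s L k m z)"

definition Pi_set :: "nat \<Rightarrow> nat \<Rightarrow> (nat \<Rightarrow> complex poly) \<Rightarrow> nat \<Rightarrow> complex poly set" where
  "Pi_set q s L m = (\<lambda>k. e_tilde q s L k m) ` {0..q}"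

end

theory Submission
  imports Defs "HOL-Computational_Algebra.Polynomial_Factorial" "HOL-Computational_Algebra.Field_as_Ring" "HOL-Computational_Algebra.Fundamental_Theorem_Algebra"
begin

definition pA :: "nat \<Rightarrow> nat \<Rightarrow> real" where
  "pA q j = (fact (2*q-j) * fact q) / (fact (2*q) * fact j * fact (q-j))"

lemma coeff_padeN: "coeff (padeN q) j = (if j \<le> q then of_real (pA q j) else 0)"
  by (simp add: padeN_def coeff_sum pA_def)

lemma pA_0: "pA q 0 = 1" by (simp add: pA_def)
lemma pA_1: "q \<ge> 1 \<Longrightarrow> pA q 1 = 1/2"
proof -
  assume "q \<ge> 1"
  then obtain r where r: "q = r + 1" using le_Suc_ex by (metis add.commute)
  have "2*q - 1 = 2*r+1" "2*q = Suc (2*r+1)" "q - 1 = r" using r by auto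
  then show ?thesis unfolding pA_def
    by (simp add: r fact_Suc divide_simps)
qed

definition gam :: "nat \<Rightarrow> real" where "gam p = 1/(4*(2*real p+3)*(2*real p+1))"

lemma pA_core:
  fixes x y :: real
  assumes "x \<ge> 0" "y \<ge> 0"
  shows "((x+2*y+4)*(x+2*y+3)) * ((x+y+3)*(x+y+2)) /
     (((2*x+2*y+6)*(2*x+2*y+5)*(2*x+2*y+4)*(2*x+2*y+3)) * ((x+2)*(x+1)) * (y+1))
   = (x+y+2) / (((2*x+2*y+4)*(2*x+2*y+3)) * ((x+2)*(x+1)))
     + 1 / ((y+1) * (4*(2*x+2*y+2+3)*(2*x+2*y+2+1)))"
proof -
  have nz: "x+2 \<noteq> 0" "x+1 \<noteq> 0" "y+1 \<noteq> 0" "2*x+2*y+6 \<noteq> 0" "2*x+2*y+5 \<noteq> 0" "2*x+2*y+4 \<noteq> 0" "2*x+2*y+3 \<noteq> 0"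
    "2*x+2*y+2+3 \<noteq> 0" "2*x+2*y+2+1 \<noteq> 0" "(4::real) \<noteq> 0"
    using assms by linarith+
  show ?thesis
    apply (subst add_frac_eq)
      apply (simp only: mult_eq_0_iff nz simp_thms)
     apply (simp only: mult_eq_0_iff nz simp_thms)
    apply (subst frac_eq_eq)
      apply (simp only: mult_eq_0_iff nz simp_thms)
     apply (simp only: mult_eq_0_iff nz simp_thms)
    by algebra
qed

lemma pA_gen_real:
  fixes x y FA FB FC Fi Fk :: real
  assumes "x \<ge> 0" "y \<ge> 0"
  shows "((x+2*y+4)*(x+2*y+3)*FA) * ((x+y+3)*(x+y+2)*FB) /
     (((2*x+2*y+6)*(2*x+2*y+5)*(2*x+2*y+4)*(2*x+2*y+3)*FC) * ((x+2)*(x+1)*Fi) * ((y+1)*Fk))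
   = FA * ((x+y+2)*FB) / (((2*x+2*y+4)*(2*x+2*y+3)*FC) * ((x+2)*(x+1)*Fi) * Fk)
     + FA * FB / (FC * Fi * ((y+1)*Fk)) / (4*(2*x+2*y+2+3)*(2*x+2*y+2+1))"
proof -
  define Z where "Z = FA * FB / (FC * Fi * Fk)"
  have G1: "((x+2*y+4)*(x+2*y+3)*FA) * ((x+y+3)*(x+y+2)*FB) /
     (((2*x+2*y+6)*(2*x+2*y+5)*(2*x+2*y+4)*(2*x+2*y+3)*FC) * ((x+2)*(x+1)*Fi) * ((y+1)*Fk))
     = Z * (((x+2*y+4)*(x+2*y+3)) * ((x+y+3)*(x+y+2)) /
     (((2*x+2*y+6)*(2*x+2*y+5)*(2*x+2*y+4)*(2*x+2*y+3)) * ((x+2)*(x+1)) * (y+1)))"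
    unfolding Z_def by (simp only: divide_inverse inverse_mult_distrib ac_simps)
  have G2: "FA * ((x+y+2)*FB) / (((2*x+2*y+4)*(2*x+2*y+3)*FC) * ((x+2)*(x+1)*Fi) * Fk)
     = Z * ((x+y+2) / (((2*x+2*y+4)*(2*x+2*y+3)) * ((x+2)*(x+1))))"
    unfolding Z_def by (simp only: divide_inverse inverse_mult_distrib ac_simps)
  have G3: "FA * FB / (FC * Fi * ((y+1)*Fk)) / (4*(2*x+2*y+2+3)*(2*x+2*y+2+1))
     = Z * (1 / ((y+1) * (4*(2*x+2*y+2+3)*(2*x+2*y+2+1))))"
    unfolding Z_def by (simp only: divide_inverse inverse_mult_distrib ac_simps mult_1_left)
  show ?thesis unfolding G1 G2 G3 pA_core[OF assms] by (simp only: distrib_left)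
qed

lemma gam_alt: "gam p * A = A / (4*(2*p+3)*(2*p+1))"
  unfolding gam_def by (simp add: algebra_simps)

lemma pA_gen_old: "pA (i+k+3) (i+2) = pA (i+k+2) (i+2) + pA (i+k+1) i / (4*(2*(i+k+1)+3)*(2*(i+k+1)+1))"
proof -
  have n: "2*(i+k+3) - (i+2) = i+2*k+4" "i+k+3-(i+2) = k+1" "2*(i+k+3) = 2*i+2*k+6"
     "2*(i+k+2) - (i+2) = i+2*k+2" "i+k+2-(i+2) = k" "2*(i+k+2) = 2*i+2*k+4"
     "2*(i+k+1) - i = i+2*k+2" "i+k+1-i = k+1" "2*(i+k+1) = 2*i+2*k+2"
     "2*i+2*k+6 - (i+2) = i+2*k+4" "2*i+2*k+4 - (i+2) = i+2*k+2" "2*i+2*k+2 - i = i+2*k+2" by auto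
  have f: "fact (i+2*k+4) = real (i+2*k+4) * (i+2*k+3) * fact (i+2*k+2)"
    "fact (i+k+3) = real (i+k+3) * (i+k+2) * fact (i+k+1)"
    "fact (i+k+2) = real (i+k+2) * fact (i+k+1)"
    "fact (2*i+2*k+6) = real (2*i+2*k+6) * (2*i+2*k+5) * (2*i+2*k+4) * (2*i+2*k+3) * fact (2*i+2*k+2)"
    "fact (2*i+2*k+4) = real (2*i+2*k+4) * (2*i+2*k+3) * fact (2*i+2*k+2)"
    "fact (i+2) = real (i+2) * (i+1) * fact i"
    "fact (k+1) = real (k+1) * fact k"
    by (simp_all add: fact_Suc numeral_eq_Suc algebra_simps)
  have pos: "fact (i+2*k+2) > (0::real)" "fact (i+k+1) > (0::real)" "fact (2*i+2*k+2) > (0::real)"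
     "fact i > (0::real)" "fact k > (0::real)" by auto
  show ?thesis unfolding pA_def
    apply (simp only: n f of_nat_add of_nat_mult of_nat_numeral of_nat_1)
    apply (rule pA_gen_real)
    by auto
qed

lemma pA_gen: "pA (i+k+3) (i+2) = pA (i+k+2) (i+2) + gam (i+k+1) * pA (i+k+1) i"
  unfolding gam_alt by (rule pA_gen_old)

lemma pA_top: "pA (p+2) (p+2) = gam p * pA p p"
proof -
  have f: "fact (p+2) = real (p+2) * (p+1) * fact p"
    "fact (2*p+4) = real (2*p+4) * (2*p+3) * (2*p+2) * (2*p+1) * fact (2*p)"
    by (simp_all add: fact_Suc numeral_eq_Suc algebra_simps)
  have n: "2*(p+2) - (p+2) = p+2" "2*(p+2) = 2*p+4" "2*p-p = p" by auto
  have pos: "fact p > (0::real)" "fact (2*p) > (0::real)" by auto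
  show ?thesis unfolding pA_def gam_def
    apply (simp only: n f of_nat_add of_nat_mult of_nat_numeral of_nat_1)
    using pos apply (simp add: divide_simps)
    apply (simp add: algebra_simps)
    done
qed

lemma pA_1': "pA (Suc q) (Suc 0) = 1/2" using pA_1[of "Suc q"] by simp

lemma pA_rec:
  assumes "j \<le> p + 1"
  shows "pA (p+2) j = pA (p+1) j + gam p * (if 2 \<le> j then pA p (j-2) else 0)"
proof (cases "2 \<le> j")
  case True
  then obtain i where i: "j = i + 2" using le_Suc_ex by (metis add.commute)
  obtain k where k: "p = i + k + 1" using assms i le_Suc_ex by (metis add.commute add_le_cancel_right add_Suc_right numeral_2_eq_2 add_Suc_shift le_add_diff_inverse2 ab_semigroup_add_class.add_ac(1) nat_arith.suc1 Suc_eq_plus1 Suc_le_eq less_imp_Suc_add)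
  have X: "i+k+1+2 = i+k+3" "i+k+1+1 = i+k+2" "i+2-2 = i" by auto
  show ?thesis using True unfolding i k X by (simp only: if_True) (rule pA_gen)
next
  case False
  then have "j = 0 \<or> j = 1" by auto
  then show ?thesis using False by (auto simp: pA_0 pA_1')
qed


lemma padeN_rec: "padeN (p+2) = padeN (p+1) + smult (of_real (gam p)) (pCons 0 (pCons 0 (padeN p)))"
proof (rule poly_eqI)
  fix j
  show "coeff (padeN (p+2)) j = coeff (padeN (p+1) + smult (of_real (gam p)) (pCons 0 (pCons 0 (padeN p)))) j"
  proof (cases "j \<le> p+1")
    case True
    have B: "coeff (pCons 0 (pCons 0 (padeN p))) j = (if 2 \<le> j then of_real (pA p (j-2)) else 0)"
      using True by (cases j; cases "j - 1") (auto simp: coeff_padeN coeff_pCons split: nat.splits)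
    have e: "pA (p+2) j = pA (p+1) j + gam p * (if 2 \<le> j then pA p (j-2) else 0)"
      using pA_rec[OF True] by simp
    have e2: "complex_of_real (pA (p+2) j) = of_real (pA (p+1) j) + of_real (gam p) * (if 2 \<le> j then of_real (pA p (j-2)) else 0)"
      by (cases "2 \<le> j") (simp_all only: e of_real_add of_real_mult if_True if_False of_real_0 mult_zero_right add_0_right)
    have c1: "coeff (padeN (p+2)) j = of_real (pA (p+2) j)" "coeff (padeN (p+1)) j = of_real (pA (p+1) j)"
      using True by (simp_all add: coeff_padeN)
    show ?thesis
      by (simp only: coeff_add coeff_smult B c1 e2)
  next
    case False
    show ?thesis
    proof (cases "j = p+2")
      case True
      have B: "coeff (pCons 0 (pCons 0 (padeN p))) j = of_real (pA p p)"
        using True by (simp add: coeff_padeN)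
      have c1: "coeff (padeN (p+2)) j = of_real (pA (p+2) (p+2))" "coeff (padeN (p+1)) j = 0"
        using True by (simp_all add: coeff_padeN)
      have e2: "complex_of_real (pA (p+2) (p+2)) = of_real (gam p) * of_real (pA p p)"
        unfolding pA_top[of p] by (simp only: of_real_mult)
      show ?thesis by (simp only: coeff_add coeff_smult B c1 e2 add_0_left)
    next
      case F2: False
      have B: "coeff (pCons 0 (pCons 0 (padeN p))) j = 0"
        using False F2 by (cases j; cases "j - 1") (auto simp: coeff_padeN coeff_pCons split: nat.splits)
      have c1: "coeff (padeN (p+2)) j = 0" "coeff (padeN (p+1)) j = 0"
        using False F2 by (simp_all add: coeff_padeN)
      show ?thesis by (simp only: coeff_add coeff_smult B c1 mult_zero_right add_0_left)
    qed
  qed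
qed

lemma poly_padeD: "poly (padeD q) z = poly (padeN q) (-z)"
  by (simp add: padeD_def poly_pcompose)

lemma padeN_0: "padeN 0 = 1"
  by (simp add: padeN_def)

lemma pA_11: "pA (Suc 0) (Suc 0) = 1/2" by (simp add: pA_def)

lemma poly_padeN_1: "poly (padeN (Suc 0)) z = 1 + z/2"
proof -
  have "padeN (Suc 0) = [:1, 1/2:]"
    by (rule poly_eqI) (auto simp: coeff_padeN pA_0 pA_11 coeff_pCons split: nat.splits)
  then show ?thesis by simp
qed

lemma padeN_0_val: "poly (padeN q) 0 = 1"
  by (simp add: poly_0_coeff_0 coeff_padeN pA_0)

lemma wronsk:
  "\<exists>c. c \<noteq> 0 \<and> (\<forall>z. poly (padeN (p+1)) z * poly (padeN p) (-z) - poly (padeN p) z * poly (padeN (p+1)) (-z) = c * z^(2*p+1))"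
proof (induction p)
  case 0
  show ?case by (rule exI[of _ 1]) (simp add: padeN_0 poly_padeN_1)
next
  case (Suc p)
  then obtain c where c: "c \<noteq> 0" "\<And>z. poly (padeN (p+1)) z * poly (padeN p) (-z) - poly (padeN p) z * poly (padeN (p+1)) (-z) = c * z^(2*p+1)" by blast
  define g :: complex where "g = of_real (gam p)"
  have g0: "(4*(2*real p+3)*(2*real p+1)) > 0" by (intro mult_pos_pos) auto
  have "gam p > 0" unfolding gam_def by (rule divide_pos_pos) (simp, rule g0)
  then have g: "g \<noteq> 0" unfolding g_def by simp
  have r: "\<And>z. poly (padeN (p+2)) z = poly (padeN (p+1)) z + g * z^2 * poly (padeN p) z"
    by (subst padeN_rec) (simp add: g_def power2_eq_square)
  show ?case
  proof (rule exI[of _ "- g * c"], intro conjI allI)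
    show "- g * c \<noteq> 0" using g c by simp
    fix z :: complex
    have "poly (padeN (Suc p + 1)) z * poly (padeN (Suc p)) (- z) - poly (padeN (Suc p)) z * poly (padeN (Suc p + 1)) (- z)
      = - g * z^2 * (poly (padeN (p+1)) z * poly (padeN p) (-z) - poly (padeN p) z * poly (padeN (p+1)) (-z))"
      using r[of z] r[of "-z"] by (simp add: algebra_simps)
    also have "\<dots> = - g * c * z^(2 * Suc p + 1)" using c(2)[of z] by (simp add: algebra_simps power_add power2_eq_square)
    finally show "poly (padeN (Suc p + 1)) z * poly (padeN (Suc p)) (- z) - poly (padeN (Suc p)) z * poly (padeN (Suc p + 1)) (- z) = - g * c * z^(2 * Suc p + 1)" .
  qed
qed

lemma no_common_root:
  assumes "q \<ge> 1" "poly (padeN q) z = 0" "poly (padeD q) z = 0"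
  shows False
proof -
  obtain p where p: "q = p + 1" using assms(1) le_Suc_ex by (metis add.commute)
  obtain c where c: "c \<noteq> 0" "\<And>z. poly (padeN (p+1)) z * poly (padeN p) (-z) - poly (padeN p) z * poly (padeN (p+1)) (-z) = c * z^(2*p+1)"
    using wronsk by blast
  have "c * z^(2*p+1) = 0" using c(2)[of z] assms(2,3) p by (simp add: poly_padeD)
  then have "z = 0" using c(1) by auto
  then show False using assms(2) padeN_0_val by simp
qed

lemma padeN_nz: "padeN q \<noteq> 0"
  using padeN_0_val by (metis poly_0 zero_neq_one)

lemma coprime_ND:
  assumes "q \<ge> 1"
  shows "coprime (padeN q) (padeD q)"
proof (rule ccontr)
  assume nc: "\<not> coprime (padeN q) (padeD q)"
  define g where "g = gcd (padeN q) (padeD q)"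
  have g0: "g \<noteq> 0" unfolding g_def gcd_eq_0_iff using padeN_nz by (rule contrapos_nn) (rule conjunct1)
  have "\<not> is_unit g" unfolding g_def is_unit_gcd by (rule nc)
  then have "degree g \<noteq> 0" unfolding is_unit_iff_degree[OF g0] .
  then have "0 < degree g" by linarith
  then obtain z where z: "poly g z = 0" using alg_closed_imp_poly_has_root[of g] by blast
  obtain a where a: "padeN q = g * a" using gcd_dvd1[of "padeN q" "padeD q"] unfolding g_def dvd_def by blast
  obtain b where b: "padeD q = g * b" using gcd_dvd2[of "padeN q" "padeD q"] unfolding g_def dvd_def by blast
  have "poly (padeN q) z = 0" using z a by simp
  moreover have "poly (padeD q) z = 0" using z b by simp
  ultimately show False using no_common_root[OF assms] by blast
qed

lemma degree_padeN: "degree (padeN q) = q"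
proof (rule antisym)
  show "degree (padeN q) \<le> q"
    by (rule degree_le) (simp add: coeff_padeN)
  have "pA q q \<noteq> 0" by (simp add: pA_def)
  then show "q \<le> degree (padeN q)"
    by (intro le_degree) (simp add: coeff_padeN)
qed

lemma degree_padeD: "degree (padeD q) = q"
  by (simp add: padeD_def degree_pcompose degree_padeN)

lemma padeD_nz: "padeD q \<noteq> 0"
proof
  assume "padeD q = 0"
  then have "poly (padeD q) 0 = 0" by simp
  then show False by (simp add: poly_padeD padeN_0_val)
qed

lemma poly_zero_from_cofinite:
  fixes P D :: "complex poly"
  assumes "D \<noteq> 0" "\<And>z. poly D z \<noteq> 0 \<Longrightarrow> poly P z = 0"
  shows "P = 0"
proof -
  have "\<And>z. poly (P * D) z = 0" using assms(2) by (metis mult_eq_0_iff poly_mult)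
  then have "P * D = 0" using poly_eq_poly_eq_iff[of "P*D" 0] by (auto simp: fun_eq_iff)
  then show ?thesis using assms(1) by simp
qed

definition Lt :: "nat \<Rightarrow> (nat \<Rightarrow> complex poly) \<Rightarrow> nat \<Rightarrow> complex poly" where
  "Lt q L k = (if k \<le> q then smult (1 / of_nat (2*k+1)) (L k) else 0)"

lemma poly_Lt: "poly (Lt q L k) z / poly (padeD q) z =
   (if k \<le> q then poly (L k) z / poly (padeD q) z / of_nat (2*k+1) else 0)"
  by (simp add: Lt_def)

lemma L_E1:
  assumes "is_L_family q L"
  shows "(\<Sum>k\<le>q. smult ((-1)^k * of_nat (2*k+1)) (Lt q L k)) = padeD q"
proof -
  have "(\<Sum>k\<le>q. smult ((-1)^k * of_nat (2*k+1)) (Lt q L k)) - padeD q = 0"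
  proof (rule poly_zero_from_cofinite[OF padeD_nz])
    fix z assume z: "poly (padeD q) z \<noteq> 0"
    have "(\<Sum>k\<le>q. (-1)^k * of_nat (2*k+1) * (poly (Lt q L k) z / poly (padeD q) z)) = 1"
      using assms z unfolding is_L_family_def Let_def poly_Lt by auto
    then have "(\<Sum>k\<le>q. (-1)^k * of_nat (2*k+1) * poly (Lt q L k) z) / poly (padeD q) z = 1"
      by (simp add: sum_divide_distrib)
    then have "(\<Sum>k\<le>q. (-1)^k * of_nat (2*k+1) * poly (Lt q L k) z) = poly (padeD q) z"
      using z by (simp add: divide_eq_eq)
    then show "poly ((\<Sum>k\<le>q. smult ((-1)^k * of_nat (2*k+1)) (Lt q L k)) - padeD q) z = 0"
      by (simp add: poly_sum)
  qed
  then show ?thesis by simp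
qed

lemma L_E2:
  assumes "is_L_family q L" "1 \<le> j" "j \<le> q"
  shows "monom 1 1 * Lt q L (j-1) = smult (of_nat (4*j+2)) (Lt q L j) + monom 1 1 * Lt q L (j+1)"
proof -
  have "smult (of_nat (4*j+2)) (Lt q L j) + monom 1 1 * Lt q L (j+1) - monom 1 1 * Lt q L (j-1) = 0"
  proof (rule poly_zero_from_cofinite[OF padeD_nz])
    fix z assume z: "poly (padeD q) z \<noteq> 0"
    have "- z * (poly (Lt q L (j-1)) z / poly (padeD q) z) + of_nat (4*j+2) * (poly (Lt q L j) z / poly (padeD q) z)
       + z * (poly (Lt q L (j+1)) z / poly (padeD q) z) = 0"
      using assms z unfolding is_L_family_def Let_def poly_Lt by auto
    then have "(- z * poly (Lt q L (j-1)) z + of_nat (4*j+2) * poly (Lt q L j) z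
       + z * poly (Lt q L (j+1)) z) / poly (padeD q) z = 0"
      by (simp add: add_divide_distrib diff_divide_distrib)
    then have "- z * poly (Lt q L (j-1)) z + of_nat (4*j+2) * poly (Lt q L j) z
       + z * poly (Lt q L (j+1)) z = 0" using z by simp
    then show "poly (smult (of_nat (4*j+2)) (Lt q L j) + monom 1 1 * Lt q L (j+1) - monom 1 1 * Lt q L (j-1)) z = 0"
      by (simp add: poly_monom algebra_simps)
  qed
  then show ?thesis by simp
qed

fun Pq :: "nat \<Rightarrow> nat \<Rightarrow> complex poly" where
  "Pq q 0 = 1"
| "Pq q (Suc 0) = [:of_nat (4*q+2):]"
| "Pq q (Suc (Suc i)) = smult (of_nat (4*(q-i-1)+2)) (Pq q (Suc i)) + monom 1 2 * Pq q i"

lemma Pq_rel: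
  assumes "is_L_family q L" "i \<le> q"
  shows "monom 1 i * Lt q L (q-i) = Pq q i * Lt q L q"
  using assms(2)
proof (induction i rule: less_induct)
  case (less i)
  consider "i = 0" | "i = 1" | i' where "i = Suc (Suc i')"
    by (metis One_nat_def not0_implies_Suc)
  then show ?case
  proof cases
    case 1 then show ?thesis by simp
  next
    case 2
    have q1: "1 \<le> q" using less.prems 2 by simp
    have "monom 1 1 * Lt q L (q-1) = smult (of_nat(4*q+2)) (Lt q L q) + monom 1 1 * Lt q L (q+1)"
      using L_E2[OF assms(1) q1 order.refl] .
    moreover have "Lt q L (q+1) = 0" by (simp add: Lt_def)
    ultimately show ?thesis using 2 by simp
  next
    case 3
    define j where "j = q - Suc i'"
    have j: "1 \<le> j" "j \<le> q" "j - 1 = q - i" "j + 1 = q - i'" using less.prems 3 unfolding j_def by auto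
    have E: "monom 1 1 * Lt q L (j-1) = smult (of_nat (4*j+2)) (Lt q L j) + monom 1 1 * Lt q L (j+1)"
      using L_E2[OF assms(1) j(1,2)] .
    have IH1: "monom 1 (Suc i') * Lt q L j = Pq q (Suc i') * Lt q L q"
      using less.IH[of "Suc i'"] less.prems 3 unfolding j_def by simp
    have IH2: "monom 1 i' * Lt q L (j+1) = Pq q i' * Lt q L q"
      using less.IH[of i'] less.prems 3 j(4) by simp
    have m: "monom (1::complex) i = monom 1 (Suc i') * monom 1 1" "monom (1::complex) (Suc i') * monom 1 1 = monom 1 2 * monom 1 i'"
      using 3 by (simp_all add: mult_monom)
    have "monom 1 i * Lt q L (q-i) = monom 1 (Suc i') * (monom 1 1 * Lt q L (j-1))"
      using j(3) m(1) by (simp add: mult.assoc)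
    also have "\<dots> = smult (of_nat (4*j+2)) (monom 1 (Suc i') * Lt q L j) + monom 1 2 * (monom 1 i' * Lt q L (j+1))"
      unfolding E by (simp only: distrib_left mult_smult_right mult.assoc[symmetric] m(2))
    also have "\<dots> = Pq q i * Lt q L q"
      unfolding IH1 IH2 3 by (simp add: j_def algebra_simps)
    finally show ?thesis .
  qed
qed

lemma Pq_deg: "degree (Pq q i) \<le> i \<and> coeff (Pq q i) i = (if even i then 1 else 0)"
proof (induction q i rule: Pq.induct)
  case (1 q)
  then show ?case by simp
next
  case (2 q)
  then show ?case by simp
next
  case (3 q i)
  have d1: "degree (smult (of_nat (4*(q-i-1)+2)) (Pq q (Suc i))) \<le> Suc (Suc i)"
    using 3(1) by (meson degree_smult_le le_SucI order_trans)
  have d2: "degree (monom (1::complex) 2 * Pq q i) \<le> Suc (Suc i)"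
    using 3(2) degree_mult_le[of "monom (1::complex) 2" "Pq q i"] degree_monom_le[of "1::complex" 2] by linarith
  have c1: "coeff (Pq q (Suc i)) (Suc (Suc i)) = 0" using 3(1) by (simp add: coeff_eq_0)
  have c2: "coeff (monom (1::complex) 2 * Pq q i) (Suc (Suc i)) = coeff (Pq q i) i"
    by (simp add: coeff_monom_mult)
  show ?case using d1 d2 c1 c2 3(2) by (auto intro: degree_add_le)
qed

definition Tq :: "nat \<Rightarrow> complex poly" where
  "Tq q = (\<Sum>k\<le>q. smult ((-1)^k * of_nat (2*k+1)) (monom 1 k * Pq q (q-k)))"

lemma Tq_rel:
  assumes "is_L_family q L"
  shows "monom 1 q * padeD q = Tq q * Lt q L q"
proof -
  have "monom 1 q * padeD q = (\<Sum>k\<le>q. smult ((-1)^k * of_nat (2*k+1)) (monom 1 q * Lt q L k))"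
    unfolding L_E1[OF assms, symmetric] by (simp add: sum_distrib_left mult_smult_right)
  also have "\<dots> = (\<Sum>k\<le>q. smult ((-1)^k * of_nat (2*k+1)) (monom 1 k * Pq q (q-k) * Lt q L q))"
  proof (rule sum.cong[OF refl])
    fix k assume k: "k \<in> {..q}"
    have "monom (1::complex) q = monom 1 k * monom 1 (q-k)" using k by (simp add: mult_monom)
    then have "monom 1 q * Lt q L k = monom 1 k * (monom 1 (q-k) * Lt q L (q-(q-k)))"
      using k by (simp add: mult.assoc)
    also have "\<dots> = monom 1 k * Pq q (q-k) * Lt q L q"
      using Pq_rel[OF assms, of "q-k"] by (simp add: mult.assoc)
    finally show "smult ((-1)^k * of_nat (2*k+1)) (monom 1 q * Lt q L k) = smult ((-1)^k * of_nat (2*k+1)) (monom 1 k * Pq q (q-k) * Lt q L q)"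
      by simp
  qed
  also have "\<dots> = Tq q * Lt q L q"
    unfolding Tq_def by (simp add: sum_distrib_right mult_smult_left)
  finally show ?thesis .
qed

lemma Tq_deg_le: "degree (Tq q) \<le> q"
  unfolding Tq_def
proof (rule degree_sum_le)
  fix k assume k: "k \<in> {..q}"
  have "degree (monom (1::complex) k * Pq q (q-k)) \<le> k + (q-k)"
    using degree_mult_le[of "monom (1::complex) k" "Pq q (q-k)"] degree_monom_le[of "1::complex" k] Pq_deg[of q "q-k"]
    by linarith
  then show "degree (smult ((-1)^k * of_nat (2*k+1)) (monom 1 k * Pq q (q-k))) \<le> q"
    using k degree_smult_le[of "(-1)^k * of_nat (2*k+1)" "monom (1::complex) k * Pq q (q-k)"] by simp
qed simp

lemma Tq_coeff: "coeff (Tq q) q \<noteq> 0"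
proof -
  have "coeff (Tq q) q = (\<Sum>k\<le>q. (-1)^k * of_nat (2*k+1) * coeff (Pq q (q-k)) (q-k))"
    unfolding Tq_def coeff_sum
  proof (rule sum.cong[OF refl])
    fix k assume k: "k \<in> {..q}"
    have "coeff (monom (1::complex) k * Pq q (q-k)) (k + (q-k)) = coeff (Pq q (q-k)) (q-k)"
      by (simp add: coeff_monom_mult)
    then show "coeff (smult ((-1)^k * of_nat (2*k+1)) (monom 1 k * Pq q (q-k))) q = (-1)^k * of_nat (2*k+1) * coeff (Pq q (q-k)) (q-k)"
      using k by simp
  qed
  also have "\<dots> = (\<Sum>k\<le>q. (-1)^q * of_nat (if even (q-k) then 2*k+1 else 0))"
  proof (rule sum.cong[OF refl])
    fix k assume k: "k \<in> {..q}"
    show "(-1)^k * of_nat (2*k+1) * coeff (Pq q (q-k)) (q-k) = ((-1)^q * of_nat (if even (q-k) then 2*k+1 else 0) :: complex)"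
    proof (cases "even (q-k)")
      case True
      have "q = k + (q-k)" using k by simp
      then have "(-1::complex)^q = (-1)^k * (-1)^(q-k)" by (metis power_add)
      also have "\<dots> = (-1)^k" using True by simp
      finally show ?thesis using True Pq_deg[of q "q-k"] by simp
    next
      case False
      then show ?thesis using Pq_deg[of q "q-k"] by simp
    qed
  qed
  also have "\<dots> = (-1)^q * of_nat (\<Sum>k\<le>q. (if even (q-k) then 2*k+1 else 0))"
    by (simp add: sum_distrib_left)
  finally have e: "coeff (Tq q) q = (-1)^q * of_nat (\<Sum>k\<le>q. (if even (q-k) then 2*k+1 else 0))" .
  have "(2*q+1) \<le> (\<Sum>k\<le>q. (if even (q-k) then 2*k+1 else 0))"
    using member_le_sum[of q "{..q}" "\<lambda>k. (if even (q-k) then 2*k+1 else 0)"] by simp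
  then have "(\<Sum>k\<le>q. (if even (q-k) then 2*k+1 else 0)) \<noteq> (0::nat)" by linarith
  then have A: "complex_of_nat (\<Sum>k\<le>q. (if even (q-k) then 2*k+1 else 0)) \<noteq> 0" by (simp only: of_nat_eq_0_iff not_False_eq_True)
  have B: "(-1::complex)^q \<noteq> 0" by simp
  show ?thesis unfolding e mult_eq_0_iff de_Morgan_disj using A B by blast
qed

lemma degree_L:
  assumes "is_L_family q L" "k \<le> q"
  shows "degree (L k) \<le> q"
proof -
  have nz: "complex_of_nat (2*k+1) \<noteq> 0" by (simp only: of_nat_eq_0_iff)
  have dLt: "degree (Lt q L k) = degree (L k)"
    using assms(2) nz by (simp add: Lt_def)
  have T0: "Tq q \<noteq> 0"
  proof
    assume "Tq q = 0"
    then have "coeff (Tq q) q = 0" by simp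
    with Tq_coeff[of q] show False by blast
  qed
  have dT: "degree (Tq q) = q" using Tq_deg_le Tq_coeff le_degree by (metis antisym)
  have R: "monom 1 (q-k) * Lt q L k = Pq q (q-k) * Lt q L q"
    using Pq_rel[OF assms(1), of "q-k"] assms(2) by simp
  show ?thesis
  proof (cases "Lt q L q = 0")
    case True
    then have "Lt q L k = 0" using R by simp
    then show ?thesis using dLt by simp
  next
    case False
    have "degree (monom (1::complex) q * padeD q) = q + q"
      using padeD_nz by (simp add: degree_mult_eq degree_monom_eq degree_padeD)
    also have "degree (monom (1::complex) q * padeD q) = q + degree (Lt q L q)"
      unfolding Tq_rel[OF assms(1)] using T0 False dT by (simp add: degree_mult_eq)
    finally have du: "degree (Lt q L q) = q" by simp
    show ?thesis
    proof (cases "Lt q L k = 0")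
      case True then show ?thesis using dLt by simp
    next
      case F2: False
      have "(q-k) + degree (Lt q L k) = degree (Pq q (q-k) * Lt q L q)"
        unfolding R[symmetric] using F2 by (simp add: degree_mult_eq degree_monom_eq)
      also have "\<dots> \<le> (q-k) + q" using degree_mult_le[of "Pq q (q-k)" "Lt q L q"] Pq_deg[of q "q-k"] du by linarith
      finally show ?thesis using dLt by simp
    qed
  qed
qed

interpretation pv: vector_space "smult :: complex \<Rightarrow> complex poly \<Rightarrow> complex poly"
  by unfold_locales (simp_all add: smult_add_right smult_add_left)

definition Pd :: "nat \<Rightarrow> complex poly set" where "Pd n = {p. degree p \<le> n}"

lemma subspace_Pd: "pv.subspace (Pd n)"
  unfolding pv.subspace_def Pd_def
  by (auto intro: order_trans[OF degree_add_le] order_trans[OF degree_smult_le])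

definition Mon :: "nat \<Rightarrow> complex poly set" where "Mon n = (\<lambda>i. monom 1 i) ` {..n}"

lemma Mon_sub: "Mon n \<subseteq> Pd n"
  unfolding Mon_def Pd_def by (auto simp: degree_monom_eq)

lemma Pd_span_Mon: "Pd n \<subseteq> pv.span (Mon n)"
proof
  fix p assume p: "p \<in> Pd n"
  have "p = (\<Sum>i\<le>degree p. monom (coeff p i) i)" by (simp add: poly_as_sum_of_monoms)
  also have "\<dots> = (\<Sum>i\<le>degree p. smult (coeff p i) (monom 1 i))" by (simp add: smult_monom)
  also have "\<dots> \<in> pv.span (Mon n)"
  proof (rule pv.span_sum)
    fix i assume i: "i \<in> {..degree p}"
    then have "monom 1 i \<in> Mon n" using p unfolding Mon_def Pd_def by auto
    then show "smult (coeff p i) (monom 1 i) \<in> pv.span (Mon n)"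
      by (intro pv.span_scale pv.span_base)
  qed
  finally show "p \<in> pv.span (Mon n)" .
qed

lemma Mon_indep: "pv.independent (Mon n)"
  unfolding pv.independent_explicit_module
proof (intro allI impI)
  fix t u v
  assume t: "finite t" "t \<subseteq> Mon n" "(\<Sum>v\<in>t. smult (u v) v) = 0" "v \<in> t"
  then obtain i where i: "v = monom 1 i" unfolding Mon_def by auto
  have "0 = coeff (\<Sum>v\<in>t. smult (u v) v) i" using t(3) by simp
  also have "\<dots> = (\<Sum>w\<in>t. u w * coeff w i)" by (simp add: coeff_sum)
  also have "\<dots> = u v * coeff v i + (\<Sum>w\<in>t-{v}. u w * coeff w i)"
    using t(1,4) by (simp add: sum.remove)
  also have "(\<Sum>w\<in>t-{v}. u w * coeff w i) = 0"
  proof (rule sum.neutral, rule ballI)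
    fix w assume w: "w \<in> t - {v}"
    then obtain j where j: "w = monom 1 j" using t(2) unfolding Mon_def by auto
    then have "j \<noteq> i" using w i by auto
    then show "u w * coeff w i = 0" using j by simp
  qed
  finally show "u v = 0" using i by simp
qed

lemma card_Mon: "card (Mon n) = Suc n"
proof -
  have "inj_on (\<lambda>i. monom (1::complex) i) {..n}"
    by (rule inj_onI) (metis monom_eq_iff' one_neq_zero)
  then show ?thesis unfolding Mon_def by (simp add: card_image)
qed

lemma dim_Pd: "pv.dim (Pd n) = Suc n"
  by (rule pv.dim_unique[OF Mon_sub Pd_span_Mon Mon_indep card_Mon])

lemma span_L:
  assumes "is_L_family q L" "inj_on L {0..q}" "pv.independent (L ` {0..q})"
  shows "Pd q \<subseteq> pv.span (L ` {0..q})"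
proof
  fix a assume a: "a \<in> Pd q"
  show "a \<in> pv.span (L ` {0..q})"
  proof (rule ccontr)
    assume na: "a \<notin> pv.span (L ` {0..q})"
    have BV: "L ` {0..q} \<subseteq> Pd q" using degree_L[OF assms(1)] unfolding Pd_def by auto
    have ind: "pv.independent (insert a (L ` {0..q}))" by (rule pv.independent_insertI[OF na assms(3)])
    have "insert a (L ` {0..q}) \<subseteq> pv.span (Mon q)" using a BV Pd_span_Mon by blast
    then have "card (insert a (L ` {0..q})) \<le> card (Mon q)"
      using pv.independent_span_bound[OF _ ind] unfolding Mon_def by blast
    moreover have "a \<notin> L ` {0..q}" using na pv.span_base by blast
    ultimately have "Suc (card (L ` {0..q})) \<le> Suc q" by (simp add: card_Mon)
    moreover have "card (L ` {0..q}) = Suc q" using assms(2) by (simp add: card_image)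
    ultimately show False by simp
  qed
qed

lemma decomp:
  fixes N D :: "complex poly"
  assumes cop: "coprime N D" and dD: "degree D = q" and dN: "degree N \<le> q" and q: "q \<ge> 1"
  shows "degree f \<le> q * Suc n \<Longrightarrow> \<exists>p. (\<forall>m\<le>n. degree (p m) \<le> q) \<and> f = (\<Sum>m\<le>n. N^m * D^(n-m) * p m)"
proof (induction n arbitrary: f)
  case 0
  then show ?case by (intro exI[of _ "\<lambda>_. f"]) simp
next
  case (Suc n)
  have D0: "D \<noteq> 0" using dD q by auto
  have cop2: "coprime D (N^(Suc n))" using cop by (simp add: coprime_commute)
  obtain x y where xy: "x * D + y * N^(Suc n) = 1"
    using bezout_coefficients_fst_snd[of D "N^(Suc n)"] cop2 by (metis coprime_imp_gcd_eq_1)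
  define b0 where "b0 = y * f"
  define b where "b = b0 mod D"
  define a where "a = x * f + (b0 div D) * N^(Suc n)"
  have fab: "f = D * a + N^(Suc n) * b"
  proof -
    have "f = (x * D + y * N^(Suc n)) * f" using xy by simp
    also have "\<dots> = D * (x * f) + N^(Suc n) * b0" unfolding b0_def by (simp add: algebra_simps)
    also have "b0 = b0 div D * D + b" unfolding b_def by simp
    finally show ?thesis unfolding a_def by (simp add: algebra_simps)
  qed
  have db: "degree b \<le> q"
    using degree_mod_less[OF D0, of b0] dD unfolding b_def by auto
  have dbl: "b = 0 \<or> degree b < q"
    using degree_mod_less[OF D0, of b0] dD unfolding b_def by auto
  have dNb: "degree (N^(Suc n) * b) \<le> q * Suc (Suc n)"
  proof (cases "b = 0")
    case True then show ?thesis by simp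
  next
    case False
    have "degree (N^(Suc n) * b) \<le> degree (N^(Suc n)) + degree b" by (rule degree_mult_le)
    also have "degree (N^(Suc n)) \<le> Suc n * degree N" using degree_power_le[of N "Suc n"] by (simp add: mult.commute)
    also have "Suc n * degree N \<le> Suc n * q" using dN by (rule mult_le_mono2)
    finally show ?thesis using db by (simp add: algebra_simps)
  qed
  have da: "degree a \<le> q * Suc n"
  proof (cases "a = 0")
    case True then show ?thesis by simp
  next
    case False
    have "D * a = f - N^(Suc n) * b" using fab by simp
    then have "degree (D * a) \<le> q * Suc (Suc n)"
      using degree_diff_le[OF Suc.prems dNb] by simp
    then have "q + degree a \<le> q * Suc (Suc n)" using False D0 dD by (simp add: degree_mult_eq)
    then show ?thesis by simp
  qed
  obtain p where p: "\<forall>m\<le>n. degree (p m) \<le> q" "a = (\<Sum>m\<le>n. N^m * D^(n-m) * p m)"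
    using Suc.IH[OF da] by blast
  define p' where "p' = p(Suc n := b)"
  have "f = (\<Sum>m\<le>n. N^m * D^(Suc n - m) * p' m) + N^(Suc n) * D^(Suc n - Suc n) * p' (Suc n)"
  proof -
    have "D * a = (\<Sum>m\<le>n. N^m * D^(Suc n - m) * p' m)"
      unfolding p(2) sum_distrib_left
    proof (rule sum.cong[OF refl])
      fix m assume m: "m \<in> {..n}"
      then have "Suc n - m = Suc (n - m)" by auto
      then show "D * (N^m * D^(n-m) * p m) = N^m * D^(Suc n - m) * p' m"
        using m unfolding p'_def by (simp add: algebra_simps)
    qed
    then show ?thesis using fab unfolding p'_def by simp
  qed
  then have "f = (\<Sum>m\<le>Suc n. N^m * D^(Suc n - m) * p' m)" by simp
  moreover have "\<forall>m\<le>Suc n. degree (p' m) \<le> q" using p(1) db unfolding p'_def by (auto simp: le_Suc_eq)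
  ultimately show ?case by blast
qed

lemma poly_c: "poly [:0, inverse (2^s):] z = z / (2^s :: complex)"
  by (simp add: divide_inverse)

lemma e_tilde_eq:
  assumes "m < 2^s"
  shows "e_tilde q s L k m = smult (1 / of_real (sqrt (real (2*k+1) * 2^s)))
           (pcompose (padeN q ^ m * padeD q ^ (2^s - 1 - m) * L k) [:0, inverse (2^s):])"
  (is "_ = ?cand")
proof -
  let ?c = "[:0, inverse (2^s):] :: complex poly"
  let ?b = "1 / complex_of_real (sqrt (real (2*k+1) * 2^s))"
  have P: "\<forall>z. poly (padeD q) (z / 2^s) \<noteq> 0 \<longrightarrow>
      poly ?cand z = poly (padeD q) (z / 2^s) ^ (2^s) * e_fun q s L k m z"
  proof (intro allI impI)
    fix z :: complex
    define w where "w = z / 2^s"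
    assume "poly (padeD q) (z / 2^s) \<noteq> 0"
    then have Dw: "poly (padeD q) w \<noteq> 0" unfolding w_def .
    have M: "(2::nat)^s = m + (2^s - 1 - m) + 1" using assms by simp
    have pw: "poly (padeD q) w ^ (2^s) = poly (padeD q) w ^ m * poly (padeD q) w ^ (2^s - 1 - m) * poly (padeD q) w"
      by (subst M) (simp add: power_add)
    have "poly ?cand z = ?b * (poly (padeN q) w ^ m * poly (padeD q) w ^ (2^s - 1 - m) * poly (L k) w)"
      by (simp add: poly_pcompose divide_inverse w_def)
    also have "\<dots> = poly (padeD q) w ^ (2^s) * (?b * (poly (padeN q) w / poly (padeD q) w) ^ m * inverse (poly (padeD q) w) * poly (L k) w)"
      unfolding pw using Dw by (simp add: power_divide field_simps)
    also have "\<dots> = poly (padeD q) (z / 2^s) ^ (2^s) * e_fun q s L k m z"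
      unfolding e_fun_def Let_def pade_r_def w_def by simp
    finally show "poly ?cand z = poly (padeD q) (z / 2^s) ^ (2^s) * e_fun q s L k m z" .
  qed
  have dc: "degree ?c = 1" by simp
  have Dc0: "pcompose (padeD q) ?c \<noteq> 0" using padeD_nz pcompose_eq_0_iff[of ?c "padeD q"] dc by simp
  show ?thesis
    unfolding e_tilde_def
  proof (rule the_equality)
    show "\<forall>z. poly (padeD q) (z / 2^s) \<noteq> 0 \<longrightarrow> poly ?cand z = poly (padeD q) (z / 2^s) ^ (2^s) * e_fun q s L k m z"
      by (rule P)
    fix p assume p: "\<forall>z. poly (padeD q) (z / 2^s) \<noteq> 0 \<longrightarrow> poly p z = poly (padeD q) (z / 2^s) ^ (2^s) * e_fun q s L k m z"
    have "p - ?cand = 0"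
    proof (rule poly_zero_from_cofinite[OF Dc0])
      fix z assume "poly (pcompose (padeD q) ?c) z \<noteq> 0"
      then have "poly (padeD q) (z / 2^s) \<noteq> 0" by (simp add: poly_pcompose divide_inverse)
      then show "poly (p - ?cand) z = 0" using p P by simp
    qed
    then show "p = ?cand" by simp
  qed
qed

theorem proposition4:
  fixes q s :: nat and L :: "nat \<Rightarrow> complex poly"
  assumes "q \<ge> 1"
    and "is_L_family q L"
    and "inj_on L {0..q}"
    and "\<not> module.dependent smult (L ` {0..q})"
  shows "vector_space.dim smult (module.span smult (\<Union>m\<in>{0..<2^s}. Pi_set q s L m))
           = q * 2^s + 1"
proof -
  define E where "E = (\<Union>m\<in>{0..<2^s}. Pi_set q s L m)"
  define M :: nat where "M = 2^s"
  define n where "n = M - 1"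
  have M1: "M \<ge> 1" unfolding M_def by simp
  have Mn: "M = Suc n" unfolding n_def using M1 by simp
  let ?c = "[:0, inverse (2^s):] :: complex poly"
  let ?N = "padeN q" and ?D = "padeD q"
  define bt where "bt = (\<lambda>k::nat. 1 / complex_of_real (sqrt (real (2*k+1) * 2^s)))"
  have bt0: "bt k \<noteq> 0" for k unfolding bt_def by simp
  have dc: "degree ?c = 1" by simp
  have E_mem: "e_tilde q s L k m \<in> E" if "k \<le> q" "m < M" for k m
    unfolding E_def Pi_set_def
    by (rule UN_I[of m]) (use that in \<open>auto simp: M_def\<close>)
  have et: "e_tilde q s L k m = smult (bt k) (pcompose (?N ^ m * ?D ^ (M - 1 - m) * L k) ?c)" if "m < M" for k m
    using e_tilde_eq[of m s q L k] that unfolding bt_def M_def by simp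
  have S1: "E \<subseteq> Pd (q*M)"
  proof
    fix x assume "x \<in> E"
    then obtain k m where km: "k \<le> q" "m < M" "x = e_tilde q s L k m"
      unfolding E_def Pi_set_def M_def by auto
    have "degree (?N ^ m * ?D ^ (M - 1 - m) * L k) \<le> degree (?N ^ m) + degree (?D ^ (M - 1 - m)) + degree (L k)"
      using degree_mult_le[of "?N^m * ?D^(M-1-m)" "L k"] degree_mult_le[of "?N^m" "?D^(M-1-m)"] by linarith
    also have "\<dots> \<le> q * m + q * (M - 1 - m) + q"
      using degree_power_le[of ?N m] degree_power_le[of ?D "M-1-m"] degree_L[OF assms(2) km(1)]
      by (simp add: degree_padeN degree_padeD mult.commute)
    also have "\<dots> = q * (m + (M - 1 - m) + 1)" by (simp add: algebra_simps)
    also have "m + (M - 1 - m) + 1 = M" using km(2) by simp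
    finally have d: "degree (?N ^ m * ?D ^ (M - 1 - m) * L k) \<le> q * M" .
    have "degree x \<le> degree (pcompose (?N ^ m * ?D ^ (M - 1 - m) * L k) ?c)"
      unfolding km(3) et[OF km(2)] by (rule degree_smult_le)
    also have "\<dots> \<le> q * M" using d by (simp add: degree_pcompose)
    finally show "x \<in> Pd (q*M)" unfolding Pd_def by simp
  qed
  have Lspan: "Pd q \<subseteq> pv.span (L ` {0..q})"
    by (rule span_L[OF assms(2,3,4)])
  have C3: "pcompose (?N ^ m * ?D ^ (n - m) * r) ?c \<in> pv.span E" if "m \<le> n" "degree r \<le> q" for m r
  proof -
    define V where "V = {r. pcompose (?N ^ m * ?D ^ (n - m) * r) ?c \<in> pv.span E}"
    have sV: "pv.subspace V"
      unfolding pv.subspace_def V_def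
      by (auto simp: distrib_left pcompose_add mult_smult_right pcompose_smult pv.span_zero pv.span_add pv.span_scale)
    have LV: "L ` {0..q} \<subseteq> V"
    proof
      fix x assume "x \<in> L ` {0..q}"
      then obtain k where k: "k \<le> q" "x = L k" by auto
      have mM: "m < M" using that(1) Mn by simp
      have nm: "n - m = M - 1 - m" using n_def by simp
      have "pcompose (?N ^ m * ?D ^ (n - m) * L k) ?c = smult (1 / bt k) (e_tilde q s L k m)"
        unfolding et[OF mM] nm using bt0[of k] by simp
      also have "\<dots> \<in> pv.span E" by (intro pv.span_scale pv.span_base E_mem k(1) mM)
      finally show "x \<in> V" unfolding V_def k(2) by simp
    qed
    have "r \<in> V" using pv.span_minimal[OF LV sV] Lspan that(2) unfolding Pd_def by auto
    then show ?thesis unfolding V_def by simp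
  qed
  have S2: "Pd (q*M) \<subseteq> pv.span E"
  proof
    fix f assume f: "f \<in> Pd (q*M)"
    define A :: "complex poly" where "A = [:0, 2^s:]"
    define g where "g = pcompose f A"
    have "degree g \<le> q * Suc n" using f unfolding g_def A_def Pd_def Mn by (simp add: degree_pcompose)
    then obtain p where p: "\<forall>m\<le>n. degree (p m) \<le> q" "g = (\<Sum>m\<le>n. ?N^m * ?D^(n-m) * p m)"
      using decomp[OF coprime_ND[OF assms(1)] degree_padeD eq_imp_le[OF degree_padeN] assms(1), where f = g and n = n] by auto
    have Ac: "pcompose A ?c = [:0, 1:]"
      by (rule poly_eqI) (simp add: A_def pcompose_pCons coeff_pCons split: nat.splits)
    have "f = pcompose g ?c" unfolding g_def pcompose_assoc[symmetric] Ac by simp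
    also have "\<dots> = (\<Sum>m\<le>n. pcompose (?N^m * ?D^(n-m) * p m) ?c)" unfolding p(2) by (rule pcompose_sum)
    also have "\<dots> \<in> pv.span E" by (rule pv.span_sum) (use C3 p(1) in auto)
    finally show "f \<in> pv.span E" .
  qed
  have "pv.span E = Pd (q*M)"
    using pv.span_minimal[OF S1 subspace_Pd] S2 by blast
  then have "pv.dim (pv.span E) = q * M + 1" by (simp add: dim_Pd)
  then show ?thesis unfolding E_def M_def .
qed

end
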